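(* For every $d\ge2$ there exist constants $a_d,A_d>0$ and an integer $T'_d\ge1$, depending only on $d$, such that for every $\delta>0$ and every $T\ge T'_d$, \[ \delta\bigl(1+a_d\,T^{-2/(d-1)}\bigr)\;\le\;\mathrm{OPT}^{\mathrm{improper}}_d(T,\delta)\;\le\;\delta\bigl(1+A_d\,T^{-2/(d-1)}\bigr). \]
   Context: Improper linear reconstruction game: fix $d\ge1$, $T\ge0$, $\delta>0$. An adversary holds a secret $x^*\in\mathbb{R}^d$; in each round $t=1,\dots,T$ the reconstructor (possibly adaptively) chooses $v_t\in S^{d-1}$ and receives $r_t\in\mathbb{R}$ with $|r_t-\langle x^*,v_t\rangle|\le\delta$. After $T$ rounds the reconstructor outputs a function $\hat G_T:S^{d-1}\to\mathbb{R}$. All strategies are deterministic. $\mathrm{OPT}^{\mathrm{improper}}_d(T,\delta)=\inf_{\mathcal R}\sup_{x^*}\sup_{\mathcal A}\sup_{v\in S^{d-1}}|\hat G_T(v)-\langle x^*,v\rangle|$, the infimum over improper reconstructor strategies and the suprema over secrets and adversary answer strategies consistent with the secret. *)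

theory Defs
  imports "HOL-Analysis.Analysis"
begin

text \<open>A deterministic (adaptive) reconstructor is a pair (Q, G): Q maps the list of
answers received so far to the next query; G maps the full list of T answers to the
output function.  A deterministic adversary maps the list of queries asked so far
(including the current one) to its answer.\<close>

fun play_answers :: "(real list \<Rightarrow> 'v) \<Rightarrow> ('v list \<Rightarrow> real) \<Rightarrow> nat \<Rightarrow> real list" where
  "play_answers Q adv 0 = []"
| "play_answers Q adv (Suc t) =
     (let rs = play_answers Q adv t
      in rs @ [adv (map (\<lambda>k. Q (take k rs)) [0..<Suc t])])"

definition valid_reconstructor :: "(real list \<Rightarrow> real ^ 'n) \<Rightarrow> bool" where
  "valid_reconstructor Q \<longleftrightarrow> (\<forall>rs. Q rs \<in> sphere 0 1)"

definition consistent_adversary ::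
  "(real list \<Rightarrow> real ^ 'n) \<Rightarrow> ((real ^ 'n) list \<Rightarrow> real) \<Rightarrow> nat \<Rightarrow> real \<Rightarrow> real ^ 'n \<Rightarrow> bool" where
  "consistent_adversary Q adv T \<delta> x \<longleftrightarrow>
     (let rs = play_answers Q adv T in
      \<forall>k<T. \<bar>rs ! k - x \<bullet> Q (take k rs)\<bar> \<le> \<delta>)"

definition OPT_improper :: "'n::finite itself \<Rightarrow> nat \<Rightarrow> real \<Rightarrow> ereal" where
  "OPT_improper _ T \<delta> =
     (INF QG \<in> {(Q :: real list \<Rightarrow> real ^ 'n, G :: real list \<Rightarrow> real ^ 'n \<Rightarrow> real).
                   valid_reconstructor Q}.
        (SUP xav \<in> {(x, adv, v). consistent_adversary (fst QG) adv T \<delta> x \<and> v \<in> sphere 0 1}.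
           (case xav of (x, adv, v) \<Rightarrow>
              ereal \<bar>snd QG (play_answers (fst QG) adv T) v - x \<bullet> v\<bar>)))"

end

theory Submission
  imports Defs "HOL-Analysis.Analysis"
begin


lemma play_length[simp]: "length (play_answers Q adv t) = t"
  by (induction t) (auto simp: Let_def)

lemma play_take: "k \<le> t \<Longrightarrow> take k (play_answers Q adv t) = play_answers Q adv k"
proof (induction t)
  case 0 then show ?case by simp
next
  case (Suc t)
  show ?case
  proof (cases "k = Suc t")
    case True then show ?thesis by (simp add: Let_def)
  next
    case False
    then have "k \<le> t" using Suc by simp
    then show ?thesis using Suc by (simp add: Let_def)
  qed
qed

lemma play_zero: "play_answers Q (\<lambda>_. 0) t = replicate t 0"
  by (induction t) (auto simp: Let_def replicate_append_same)

lemma net_hull: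
  fixes W :: "(real^'n) set"
  assumes fin: "finite W" and c: "c > 0"
    and net: "\<And>u. norm u = 1 \<Longrightarrow> \<exists>w\<in>W. u \<bullet> w \<ge> c"
    and v: "norm v = 1"
  shows "\<exists>\<mu>. (\<forall>w\<in>W. 0 \<le> \<mu> w) \<and> sum \<mu> W = 1 / c \<and> (\<Sum>w\<in>W. \<mu> w *\<^sub>R w) = v"
proof -
  have "c *\<^sub>R v \<in> convex hull W"
  proof (rule ccontr)
    assume nin: "c *\<^sub>R v \<notin> convex hull W"
    have "closed (convex hull W)"
      by (simp add: compact_imp_closed fin finite_imp_compact_convex_hull)
    then obtain a b where ab: "a \<bullet> (c *\<^sub>R v) < b" "\<forall>x\<in>convex hull W. a \<bullet> x > b"
      using separating_hyperplane_closed_point[OF convex_convex_hull _ nin] by blast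
    have a0: "a \<noteq> 0"
    proof
      assume "a = 0"
      then have "0 < b" "\<forall>x\<in>convex hull W. b < 0" using ab by auto
      moreover obtain w where "w \<in> W" using net[of v] v by auto
      ultimately show False using hull_subset[of W convex] by force
    qed
    define u where "u = - (1 / norm a) *\<^sub>R a"
    have nu: "norm u = 1" using a0 by (simp add: u_def)
    obtain w where w: "w \<in> W" "u \<bullet> w \<ge> c" using net[OF nu] by auto
    have "a \<bullet> w > b" using ab(2) w(1) hull_subset[of W convex] by auto
    then have "a \<bullet> w > a \<bullet> (c *\<^sub>R v)" using ab(1) by simp
    then have "u \<bullet> w < u \<bullet> (c *\<^sub>R v)" using a0 by (simp add: u_def divide_simps)
    also have "\<dots> \<le> norm u * norm (c *\<^sub>R v)" by (rule norm_cauchy_schwarz)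
    also have "\<dots> = c" using nu v c by simp
    finally show False using w by simp
  qed
  then obtain lam where l: "\<forall>x\<in>W. 0 \<le> lam x" "sum lam W = 1" "(\<Sum>x\<in>W. lam x *\<^sub>R x) = c *\<^sub>R v"
    using convex_hull_finite[OF fin] by auto
  show ?thesis
  proof (intro exI[of _ "\<lambda>x. lam x / c"] conjI)
    show "\<forall>w\<in>W. 0 \<le> lam w / c" using l c by auto
    show "sum (\<lambda>x. lam x / c) W = 1 / c" using l by (simp add: sum_divide_distrib[symmetric])
    have "(\<Sum>w\<in>W. (lam w / c) *\<^sub>R w) = (1/c) *\<^sub>R (\<Sum>x\<in>W. lam x *\<^sub>R x)"
      by (simp add: scaleR_sum_right)
    then show "(\<Sum>w\<in>W. (lam w / c) *\<^sub>R w) = v" using l c by simp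
  qed
qed


lemma upper_generic:
  fixes W :: "(real^'n) set"
  assumes fin: "finite W" and Wsph: "W \<subseteq> sphere 0 1" and Wne: "W \<noteq> {}"
    and card: "card W \<le> T" and c: "c > 0" and d: "\<delta> \<ge> 0"
    and net: "\<And>u. norm u = 1 \<Longrightarrow> \<exists>w\<in>W. u \<bullet> w \<ge> c"
  shows "OPT_improper TYPE('n) T \<delta> \<le> ereal (\<delta> / c)"
proof -
  define L where "L = card W"
  have L0: "L > 0" using fin Wne by (simp add: L_def card_gt_0_iff)
  obtain h where h: "bij_betw h {0..<L} W" using ex_bij_betw_nat_finite[OF fin] L_def by auto
  define Q where "Q = (\<lambda>rs::real list. if length rs < L then h (length rs) else h 0)"
  define \<mu> where "\<mu> = (\<lambda>v. SOME \<mu>. (\<forall>w\<in>W. 0 \<le> \<mu> w) \<and> sum \<mu> W = 1 / c \<and> (\<Sum>w\<in>W. \<mu> w *\<^sub>R w) = v)"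
  define ix where "ix = inv_into {0..<L} h"
  define G where "G = (\<lambda>(rs::real list) v. \<Sum>w\<in>W. \<mu> v w * rs ! ix w)"
  have hW: "h j \<in> W" if "j < L" for j using h that by (auto simp: bij_betw_def)
  have valid: "valid_reconstructor Q"
    unfolding valid_reconstructor_def Q_def using hW L0 Wsph by (auto simp: subset_iff)
  have ix: "ix w < L \<and> h (ix w) = w" if "w \<in> W" for w
    using h that unfolding ix_def bij_betw_def
    by (metis atLeastLessThan_iff f_inv_into_f inv_into_into)
  have mu: "(\<forall>w\<in>W. 0 \<le> \<mu> v w) \<and> sum (\<mu> v) W = 1 / c \<and> (\<Sum>w\<in>W. \<mu> v w *\<^sub>R w) = v"
    if "norm v = 1" for v
    using someI_ex[OF net_hull[OF fin c net that]] unfolding \<mu>_def by blast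
  have "OPT_improper TYPE('n) T \<delta> \<le>
     (SUP xav \<in> {(x, adv, v). consistent_adversary Q adv T \<delta> x \<and> v \<in> sphere 0 1}.
           (case xav of (x, adv, v) \<Rightarrow>
              ereal \<bar>G (play_answers Q adv T) v - x \<bullet> v\<bar>))"
    unfolding OPT_improper_def
    by (rule INF_lower2[of "(Q, G)"]) (use valid in auto)
  also have "\<dots> \<le> ereal (\<delta> / c)"
  proof (rule SUP_least, clarify)
    fix x adv and v :: "real^'n"
    assume cons: "consistent_adversary Q adv T \<delta> x" and vs: "v \<in> sphere 0 1"
    define rs where "rs = play_answers Q adv T"
    have nv: "norm v = 1" using vs by simp
    note m = mu[OF nv]
    have err: "\<bar>rs ! ix w - x \<bullet> w\<bar> \<le> \<delta>" if "w \<in> W" for w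
    proof -
      have j: "ix w < L" "h (ix w) = w" using ix[OF that] by auto
      have jT: "ix w < T" using j card L_def by simp
      have "length (take (ix w) rs) = ix w" using jT by (simp add: rs_def)
      then have "Q (take (ix w) rs) = w" using j by (simp add: Q_def)
      then show ?thesis using cons jT unfolding consistent_adversary_def rs_def Let_def by metis
    qed
    have xv: "x \<bullet> v = (\<Sum>w\<in>W. \<mu> v w * (x \<bullet> w))"
    proof -
      have "x \<bullet> v = x \<bullet> (\<Sum>w\<in>W. \<mu> v w *\<^sub>R w)" using m by simp
      also have "\<dots> = (\<Sum>w\<in>W. \<mu> v w * (x \<bullet> w))" by (simp add: inner_sum_right)
      finally show ?thesis .
    qed
    have "\<bar>G rs v - x \<bullet> v\<bar> = \<bar>\<Sum>w\<in>W. \<mu> v w * (rs ! ix w - x \<bullet> w)\<bar>"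
      unfolding G_def xv by (simp add: sum_subtractf right_diff_distrib)
    also have "\<dots> \<le> (\<Sum>w\<in>W. \<bar>\<mu> v w * (rs ! ix w - x \<bullet> w)\<bar>)" by (rule sum_abs)
    also have "\<dots> \<le> (\<Sum>w\<in>W. \<mu> v w * \<delta>)"
    proof (rule sum_mono)
      fix w assume "w \<in> W"
      then show "\<bar>\<mu> v w * (rs ! ix w - x \<bullet> w)\<bar> \<le> \<mu> v w * \<delta>"
        using err m by (simp add: abs_mult mult_left_mono)
    qed
    also have "\<dots> = \<delta> / c" using m by (simp add: sum_distrib_right[symmetric])
    finally show "ereal \<bar>G (play_answers Q adv T) v - x \<bullet> v\<bar> \<le> ereal (\<delta> / c)"
      by (simp add: rs_def)
  qed
  finally show ?thesis .
qed


lemma lower_generic: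
  fixes S :: "(real^'n) set"
  assumes fin: "finite S" and Ssph: "S \<subseteq> sphere 0 1" and card: "card S > T"
    and g: "0 < \<gamma>" "\<gamma> < 1" and d: "\<delta> > 0"
    and uniq: "\<And>u w1 w2. norm u = 1 \<Longrightarrow> w1 \<in> S \<Longrightarrow> w2 \<in> S \<Longrightarrow>
        \<bar>w1 \<bullet> u\<bar> > 1 - \<gamma> \<Longrightarrow> \<bar>w2 \<bullet> u\<bar> > 1 - \<gamma> \<Longrightarrow> w1 = w2"
  shows "ereal (\<delta> / (1 - \<gamma>)) \<le> OPT_improper TYPE('n) T \<delta>"
  unfolding OPT_improper_def
proof (rule INF_greatest, clarify)
  fix Q :: "real list \<Rightarrow> real^'n" and G :: "real list \<Rightarrow> real^'n \<Rightarrow> real"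
  assume valid: "valid_reconstructor Q"
  define u where "u = (\<lambda>t. Q (replicate t (0::real)))"
  have nu: "norm (u t) = 1" for t using valid by (simp add: valid_reconstructor_def u_def)
  define B where "B = (\<lambda>t. {w\<in>S. \<bar>w \<bullet> u t\<bar> > 1 - \<gamma>})"
  have cB: "card (B t) \<le> 1" for t
  proof -
    have "finite (B t)" using fin by (simp add: B_def)
    moreover have "\<forall>a\<in>B t. \<forall>b\<in>B t. a = b" unfolding B_def using uniq[OF nu] by blast
    ultimately show ?thesis using card_le_Suc0_iff_eq by (metis One_nat_def)
  qed
  have "card (\<Union>t<T. B t) \<le> (\<Sum>t<T. card (B t))" by (rule card_UN_le) simp
  also have "\<dots> \<le> (\<Sum>t<T. 1)" by (rule sum_mono) (use cB in auto)
  also have "\<dots> = T" by simp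
  finally have "card (\<Union>t<T. B t) < card S" using card by simp
  moreover have "(\<Union>t<T. B t) \<subseteq> S" by (auto simp: B_def)
  ultimately have "\<not> S \<subseteq> (\<Union>t<T. B t)" by (metis order_less_irrefl subset_antisym)
  then obtain w where w: "w \<in> S" "\<And>t. t < T \<Longrightarrow> \<bar>w \<bullet> u t\<bar> \<le> 1 - \<gamma>"
    unfolding B_def by force
  have nw: "norm w = 1" using w Ssph by auto
  have ww: "w \<bullet> w = 1" using nw by (simp add: dot_square_norm)
  define R where "R = \<delta> / (1 - \<gamma>)"
  have R0: "R > 0" using g d by (simp add: R_def)
  have cons: "consistent_adversary Q (\<lambda>_. 0) T \<delta> (s *\<^sub>R R *\<^sub>R w)" if "\<bar>s\<bar> = 1" for s
    unfolding consistent_adversary_def Let_def play_zero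
  proof (intro allI impI)
    fix k assume k: "k < T"
    have "\<bar>(s *\<^sub>R R *\<^sub>R w) \<bullet> u k\<bar> = R * \<bar>w \<bullet> u k\<bar>" using that R0 by (simp add: abs_mult)
    also have "\<dots> \<le> R * (1 - \<gamma>)" using w(2)[OF k] R0 by (simp add: mult_left_mono)
    also have "\<dots> = \<delta>" using g by (simp add: R_def)
    finally show "\<bar>replicate T 0 ! k - (s *\<^sub>R R *\<^sub>R w) \<bullet> Q (take k (replicate T 0))\<bar> \<le> \<delta>"
      using k by (simp add: u_def min_def)
  qed
  define gv where "gv = G (replicate T 0) w"
  obtain s :: real where s: "\<bar>s\<bar> = 1" "\<bar>gv - s * R\<bar> \<ge> R"
  proof (cases "gv \<ge> 0")
    case True then show ?thesis using that[of "-1"] R0 by simp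
  next
    case False then show ?thesis using that[of 1] R0 by simp
  qed
  let ?F = "\<lambda>xav. case xav of (x, adv, v) \<Rightarrow> ereal \<bar>G (play_answers Q adv T) v - x \<bullet> v\<bar>"
  have mem: "(s *\<^sub>R R *\<^sub>R w, (\<lambda>_. 0::real), w) \<in>
      {(x, adv, v). consistent_adversary Q adv T \<delta> x \<and> v \<in> sphere 0 1}"
    using cons[OF s(1)] nw by simp
  have "ereal R \<le> ?F (s *\<^sub>R R *\<^sub>R w, (\<lambda>_. 0::real), w)"
  proof -
    have "(s *\<^sub>R R *\<^sub>R w) \<bullet> w = s * R" using ww by (simp only: inner_scaleR_left)
    then have "?F (s *\<^sub>R R *\<^sub>R w, (\<lambda>_. 0::real), w) = ereal \<bar>gv - s * R\<bar>"
      by (simp only: prod.case play_zero gv_def)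
    then show ?thesis using s(2) by simp
  qed
  also have "\<dots> \<le> (SUP xav \<in> {(x, adv, v). consistent_adversary Q adv T \<delta> x \<and> v \<in> sphere 0 1}. ?F xav)"
    by (rule SUP_upper[OF mem])
  finally show "ereal (\<delta> / (1 - \<gamma>)) \<le> (SUP xav \<in> {(x, adv, v). consistent_adversary (fst (Q, G)) adv T \<delta> x \<and> v \<in> sphere 0 1}.
           (case xav of (x, adv, v) \<Rightarrow> ereal \<bar>snd (Q, G) (play_answers (fst (Q, G)) adv T) v - x \<bullet> v\<bar>))"
    by (simp add: R_def)
qed



definition Kset :: "'n::finite \<Rightarrow> nat \<Rightarrow> ('n \<Rightarrow> nat) set" where
  "Kset i m = PiE UNIV (\<lambda>j. if j = i then {0} else {0..m})"

lemma Kset_finite: "finite (Kset i m)"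
  unfolding Kset_def by (rule finite_PiE) auto

lemma Kset_card: "card (Kset (i::'n::finite) m) = (m+1) ^ (CARD('n) - 1)"
proof -
  have "card (Kset i m) = (\<Prod>j\<in>UNIV. card (if j = i then {0} else {0..m}))"
    unfolding Kset_def by (rule card_PiE) simp
  also have "\<dots> = (\<Prod>j\<in>UNIV. if j = i then 1 else m + 1)"
    by (intro prod.cong refl) simp
  also have "\<dots> = (if i = i then 1 else m + 1) * (\<Prod>j\<in>UNIV - {i}. if j = i then 1 else m + 1)"
    by (rule prod.remove) auto
  also have "(\<Prod>j\<in>UNIV - {i}. if j = i then 1 else m + 1) = (\<Prod>j\<in>UNIV - {i}. m + 1)"
    by (intro prod.cong refl) simp
  also have "\<dots> = (m+1) ^ (CARD('n) - 1)" by (simp add: card_Diff_singleton)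
  finally show ?thesis by simp
qed

lemma Kset_mem: "k \<in> Kset i m \<longleftrightarrow> k i = 0 \<and> (\<forall>j. k j \<le> m)"
  unfolding Kset_def PiE_iff by (metis atLeastAtMost_iff le0 singletonD singletonI UNIV_I extensional_UNIV)
lemma normalize_lip:
  fixes p q :: "'a::real_normed_vector"
  assumes "p \<noteq> 0" "q \<noteq> 0"
  shows "norm ((1/norm p) *\<^sub>R p - (1/norm q) *\<^sub>R q) \<le> 2 * norm (p - q) / norm p"
proof -
  have eq: "(1/norm p) *\<^sub>R p - (1/norm q) *\<^sub>R q = (1/norm p) *\<^sub>R (p - q) + (1/norm p - 1/norm q) *\<^sub>R q"
    by (simp add: algebra_simps)
  have "norm ((1/norm p - 1/norm q) *\<^sub>R q) = \<bar>norm q - norm p\<bar> / norm p"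
    using assms by (simp add: field_simps)
  also have "\<dots> \<le> norm (p - q) / norm p"
    by (metis divide_right_mono norm_ge_zero norm_minus_commute norm_triangle_ineq3)
  finally have "norm ((1/norm p - 1/norm q) *\<^sub>R q) \<le> norm (p - q) / norm p" .
  then have "norm ((1/norm p) *\<^sub>R p - (1/norm q) *\<^sub>R q) \<le> norm (p - q) / norm p + norm (p - q) / norm p"
    unfolding eq using norm_triangle_ineq[of "(1/norm p) *\<^sub>R (p - q)" "(1/norm p - 1/norm q) *\<^sub>R q"]
    by (simp add: divide_inverse mult.commute)
  then show ?thesis by simp
qed

lemma sep_lemma:
  fixes p q :: "real^'n"
  assumes pi: "p $ i = 1" and qi: "q $ i = 1" and np: "norm p \<le> D" and nq: "norm q \<le> D"
  shows "norm (p - q) \<le> (D + D^2) * norm ((1/norm p) *\<^sub>R p - (1/norm q) *\<^sub>R q)"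
    and "norm ((1/norm p) *\<^sub>R p + (1/norm q) *\<^sub>R q) \<ge> 2 / D"
proof -
  have p1: "norm p \<ge> 1" using component_le_norm_cart[of p i] pi by simp
  have q1: "norm q \<ge> 1" using component_le_norm_cart[of q i] qi by simp
  have p0: "p \<noteq> 0" using p1 by auto
  have q0: "q \<noteq> 0" using q1 by auto
  define a where "a = (1/norm p) *\<^sub>R p"
  define b where "b = (1/norm q) *\<^sub>R q"
  have pa: "p = norm p *\<^sub>R a" using p0 by (simp add: a_def)
  have qb: "q = norm q *\<^sub>R b" using q0 by (simp add: b_def)
  have nb: "norm b = 1" using q0 by (simp add: b_def)
  have ai: "a $ i = 1 / norm p" using pi by (simp add: a_def)
  have bi: "b $ i = 1 / norm q" using qi by (simp add: b_def)
  have e: "norm p * norm q * (1/norm q - 1/norm p) = norm p - norm q" using p0 q0 by (simp add: field_simps)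
  have "\<bar>norm p - norm q\<bar> = norm p * norm q * \<bar>b $ i - a $ i\<bar>"
    unfolding ai bi e[symmetric] by (simp add: abs_mult)
  also have "\<dots> \<le> D * D * norm (a - b)"
  proof -
    have "\<bar>b $ i - a $ i\<bar> \<le> norm (a - b)"
      using component_le_norm_cart[of "a - b" i] by simp
    moreover have "norm p * norm q \<le> D * D" using np nq p1 q1 by (simp add: mult_mono)
    ultimately show ?thesis using p1 q1 by (meson abs_ge_zero mult_mono norm_ge_zero order_trans mult_nonneg_nonneg zero_le_one)
  qed
  finally have dpq: "\<bar>norm p - norm q\<bar> \<le> D * D * norm (a - b)" .
  have "p - q = norm p *\<^sub>R (a - b) + (norm p - norm q) *\<^sub>R b"
    by (subst pa, subst qb) (simp add: algebra_simps)
  then have "norm (p - q) \<le> norm p * norm (a - b) + \<bar>norm p - norm q\<bar>"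
    using norm_triangle_ineq[of "norm p *\<^sub>R (a - b)" "(norm p - norm q) *\<^sub>R b"] nb by simp
  also have "\<dots> \<le> D * norm (a - b) + D * D * norm (a - b)"
    using np dpq by (simp add: add_mono mult_right_mono)
  finally show "norm (p - q) \<le> (D + D^2) * norm (a - b)" by (simp add: algebra_simps power2_eq_square)
  have "(a + b) $ i = 1 / norm p + 1 / norm q" using ai bi by simp
  have D0: "D > 0" using np p1 by linarith
  moreover have "1 / norm p \<ge> 1 / D" using np p1 D0 p0 by (simp add: divide_simps)
  moreover have "1 / norm q \<ge> 1 / D" using nq q1 D0 q0 by (simp add: divide_simps)
  ultimately have "(a + b) $ i \<ge> 2 / D" using ai bi by simp
  then show "norm (a + b) \<ge> 2 / D" using component_le_norm_cart[of "a + b" i] by simp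
qed

lemma close_sign:
  fixes w u :: "'a::real_inner"
  assumes "norm w = 1" "norm u = 1" "\<bar>w \<bullet> u\<bar> > 1 - s^2/8" "s > 0"
  shows "\<exists>\<sigma>::real. \<bar>\<sigma>\<bar> = 1 \<and> norm (w - \<sigma> *\<^sub>R u) < s / 2"
proof -
  define \<sigma> :: real where "\<sigma> = (if w \<bullet> u \<ge> 0 then 1 else -1)"
  have sa: "\<bar>\<sigma>\<bar> = 1" "\<sigma> * (w \<bullet> u) = \<bar>w \<bullet> u\<bar>" by (auto simp: \<sigma>_def)
  have h: "w \<bullet> (\<sigma> *\<^sub>R u) = ((norm w)\<^sup>2 + (norm (\<sigma> *\<^sub>R u))\<^sup>2 - (norm (w - \<sigma> *\<^sub>R u))\<^sup>2) / 2"
    by (rule dot_norm_neg)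
  have "(norm (w - \<sigma> *\<^sub>R u))^2 = 2 - 2 * \<bar>w \<bullet> u\<bar>"
    using h sa assms(1,2) by simp
  also have "\<dots> < (s/2)^2" using assms(3) by (simp add: power_divide)
  finally have "norm (w - \<sigma> *\<^sub>R u) < s / 2"
    using assms(4) by (meson power_less_imp_less_base divide_nonneg_nonneg less_imp_le zero_le_numeral)
  then show ?thesis by (intro exI[of _ \<sigma>]) (simp add: \<sigma>_def)
qed

lemma uniq_from_sep:
  fixes S :: "(real^'n) set"
  assumes Ssph: "S \<subseteq> sphere 0 1" and s: "s > 0"
    and sep1: "\<And>w1 w2. w1 \<in> S \<Longrightarrow> w2 \<in> S \<Longrightarrow> w1 \<noteq> w2 \<Longrightarrow> norm (w1 - w2) \<ge> s"
    and sep2: "\<And>w1 w2. w1 \<in> S \<Longrightarrow> w2 \<in> S \<Longrightarrow> norm (w1 + w2) \<ge> s"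
    and u: "norm u = 1" and w: "w1 \<in> S" "w2 \<in> S"
    and c: "\<bar>w1 \<bullet> u\<bar> > 1 - s^2/8" "\<bar>w2 \<bullet> u\<bar> > 1 - s^2/8"
  shows "w1 = w2"
proof (rule ccontr)
  assume ne: "w1 \<noteq> w2"
  have n1: "norm w1 = 1" "norm w2 = 1" using w Ssph by auto
  obtain s1 :: real where s1: "\<bar>s1\<bar> = 1" "norm (w1 - s1 *\<^sub>R u) < s/2" using close_sign[OF n1(1) u c(1) s] by blast
  obtain s2 :: real where s2: "\<bar>s2\<bar> = 1" "norm (w2 - s2 *\<^sub>R u) < s/2" using close_sign[OF n1(2) u c(2) s] by blast
  have "norm (s2 *\<^sub>R w1 - s1 *\<^sub>R w2) = norm (s2 *\<^sub>R (w1 - s1 *\<^sub>R u) - s1 *\<^sub>R (w2 - s2 *\<^sub>R u))"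
    by (simp add: algebra_simps)
  also have "\<dots> \<le> norm (s2 *\<^sub>R (w1 - s1 *\<^sub>R u)) + norm (s1 *\<^sub>R (w2 - s2 *\<^sub>R u))"
    by (rule norm_triangle_ineq4)
  also have "\<dots> < s" using s1 s2 by simp
  finally have lt: "norm (s2 *\<^sub>R w1 - s1 *\<^sub>R w2) < s" .
  have "s1 = 1 \<or> s1 = -1" "s2 = 1 \<or> s2 = -1" using s1 s2 by auto
  then have "norm (w1 - w2) < s \<or> norm (w1 + w2) < s"
  proof (elim disjE)
    assume "s1 = 1" "s2 = 1" then show ?thesis using lt by simp
  next
    assume a: "s1 = 1" "s2 = -1"
    have "s2 *\<^sub>R w1 - s1 *\<^sub>R w2 = - (w1 + w2)" using a by simp
    then show ?thesis using lt by (metis norm_minus_cancel)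
  next
    assume a: "s1 = -1" "s2 = 1"
    have "s2 *\<^sub>R w1 - s1 *\<^sub>R w2 = w1 + w2" using a by simp
    then show ?thesis using lt by simp
  next
    assume a: "s1 = -1" "s2 = -1"
    have "s2 *\<^sub>R w1 - s1 *\<^sub>R w2 = - (w1 - w2)" using a by simp
    then show ?thesis using lt by (metis norm_minus_cancel)
  qed
  then show False using sep1[OF w ne] sep2[OF w] by linarith
qed



lemma lower_bound_T:
  assumes N2: "CARD('n::finite) \<ge> 2" and T1: "T \<ge> 1" and d0: "\<delta> > 0"
  shows "ereal (\<delta> * (1 + (1 / (128 * real CARD('n)^4)) * real T powr (- 2 / (real CARD('n) - 1))))
           \<le> OPT_improper TYPE('n) T \<delta>"
proof -
  define N where "N = CARD('n)"
  define dr where "dr = real N"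
  have dr2: "dr \<ge> 2" using N2 by (simp add: dr_def N_def)
  define e where "e = 1 / (dr - 1)"
  define r where "r = real T powr e"
  have T1r: "real T \<ge> 1" using T1 by simp
  have r1: "r \<ge> 1" unfolding r_def e_def using T1r dr2 by (simp add: ge_one_powr_ge_zero)
  define m where "m = nat \<lceil>r\<rceil>"
  have m_ge: "real m \<ge> r" unfolding m_def by linarith
  have m_le: "real m \<le> 2 * r" unfolding m_def using r1 by linarith
  have m1: "m \<ge> 1" using m_ge r1 by linarith
  have rpow: "r ^ (N - 1) = real T"
  proof -
    have "r ^ (N - 1) = r powr real (N - 1)" using r1 by (simp add: powr_realpow)
    also have "\<dots> = real T powr (e * real (N - 1))" unfolding r_def by (simp add: powr_powr)
    also have "e * real (N - 1) = 1" using dr2 N2 by (simp add: e_def dr_def of_nat_diff)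
    finally show ?thesis using T1r by simp
  qed
  have cardK: "card (Kset (undefined::'n) m) > T"
  proof -
    have "real T = r ^ (N - 1)" using rpow by simp
    also have "\<dots> < real (m + 1) ^ (N - 1)"
      using m_ge r1 N2 by (intro power_strict_mono) (auto simp: N_def)
    finally have "real T < real ((m+1)^(N-1))" by simp
    then show ?thesis unfolding Kset_card N_def of_nat_less_iff .
  qed
  define i0 where "i0 = (undefined::'n)"
  define P where "P = (\<lambda>k::'n \<Rightarrow> nat. (\<chi> j. if j = i0 then 1 else real (k j) / real m) :: real^'n)"
  define nrm where "nrm = (\<lambda>x::real^'n. (1 / norm x) *\<^sub>R x)"
  define S where "S = (\<lambda>k. nrm (P k)) ` Kset i0 m"
  have Pi0: "P k $ i0 = 1" for k by (simp add: P_def)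
  have Pn: "norm (P k) \<le> dr" if "k \<in> Kset i0 m" for k
  proof -
    have "norm (P k) \<le> (\<Sum>j\<in>UNIV. \<bar>P k $ j\<bar>)" by (rule norm_le_l1_cart)
    also have "\<dots> \<le> (\<Sum>j\<in>(UNIV::'n set). 1)"
    proof (rule sum_mono)
      fix j
      have "k j \<le> m" using that by (simp add: Kset_mem)
      then show "\<bar>P k $ j\<bar> \<le> 1" using m1 by (simp add: P_def divide_le_eq_1)
    qed
    also have "\<dots> = dr" by (simp add: dr_def N_def)
    finally show ?thesis .
  qed
  have Pdiff: "norm (P k - P k') \<ge> 1 / real m" if kk: "k \<in> Kset i0 m" "k' \<in> Kset i0 m" "k \<noteq> k'" for k k'
  proof -
    obtain j where j: "k j \<noteq> k' j" using kk(3) by auto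
    have "1 \<le> \<bar>real (k j) - real (k' j)\<bar>" using j by linarith
    then have "1 / real m \<le> \<bar>real (k j) - real (k' j)\<bar> / real m"
      using m1 by (simp add: divide_right_mono)
    also have "\<dots> = \<bar>(P k - P k') $ j\<bar>"
      using kk j by (auto simp: P_def Kset_mem abs_divide simp flip: diff_divide_distrib)
    also have "\<dots> \<le> norm (P k - P k')" by (rule component_le_norm_cart)
    finally show ?thesis .
  qed
  define s where "s = 1 / (2 * dr^2 * real m)"
  have s0: "s > 0" using dr2 m1 by (simp add: s_def)
  have sep1k: "norm (nrm (P k) - nrm (P k')) \<ge> s" if "k \<in> Kset i0 m" "k' \<in> Kset i0 m" "k \<noteq> k'" for k k'
  proof -
    have "1 / real m \<le> (dr + dr^2) * norm (nrm (P k) - nrm (P k'))"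
      using Pdiff[OF that] sep_lemma(1)[OF Pi0 Pi0 Pn[OF that(1)] Pn[OF that(2)]]
      unfolding nrm_def by linarith
    also have "\<dots> \<le> (2 * dr^2) * norm (nrm (P k) - nrm (P k'))"
      using dr2 by (intro mult_right_mono) (auto simp: power2_eq_square)
    finally have "1 / real m \<le> (2 * dr^2) * norm (nrm (P k) - nrm (P k'))" .
    then show ?thesis using dr2 m1 by (simp add: s_def divide_simps mult.commute mult.left_commute)
  qed
  have sep2k: "norm (nrm (P k) + nrm (P k')) \<ge> s" if "k \<in> Kset i0 m" "k' \<in> Kset i0 m" for k k'
  proof -
    have "2 / dr \<le> norm (nrm (P k) + nrm (P k'))"
      using sep_lemma(2)[OF Pi0 Pi0 Pn[OF that(1)] Pn[OF that(2)]] unfolding nrm_def .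
    moreover have "s \<le> 2 / dr"
    proof -
      have "1 \<le> 4 * dr * real m" using dr2 m1 by (metis mult_ge1_I  of_nat_1 of_nat_mono order_trans dual_order.trans mult_le_cancel_left1 le_numeral_extra(4) linorder_not_le not_numeral_le_zero numeral_le_one_iff semiring_norm(69) zero_le_one one_le_numeral)
      then show ?thesis using dr2 m1 by (simp add: s_def divide_simps power2_eq_square)
    qed
    ultimately show ?thesis by linarith
  qed
  have unit: "norm (nrm (P k)) = 1" for k
  proof -
    have "norm (P k) \<ge> 1" using component_le_norm_cart[of "P k" i0] Pi0 by simp
    then have "P k \<noteq> 0" by (metis norm_zero not_one_le_zero)
    then show ?thesis by (simp add: nrm_def)
  qed
  have inj: "inj_on (\<lambda>k. nrm (P k)) (Kset i0 m)"
  proof (rule inj_onI, rule ccontr)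
    fix k k' assume a: "k \<in> Kset i0 m" "k' \<in> Kset i0 m" "nrm (P k) = nrm (P k')" "k \<noteq> k'"
    have "s \<le> norm (nrm (P k) - nrm (P k'))" by (rule sep1k[OF a(1,2,4)])
    then show False using s0 a(3) by simp
  qed
  have cardS: "card S > T" using cardK inj by (simp add: S_def card_image i0_def)
  have finS: "finite S" by (simp add: S_def Kset_finite)
  have Ssph: "S \<subseteq> sphere 0 1" using unit by (auto simp: S_def)
  have sep1: "norm (w1 - w2) \<ge> s" if w: "w1 \<in> S" "w2 \<in> S" "w1 \<noteq> w2" for w1 w2
  proof -
    obtain k1 where k1: "k1 \<in> Kset i0 m" "w1 = nrm (P k1)" using w(1) unfolding S_def by blast
    obtain k2 where k2: "k2 \<in> Kset i0 m" "w2 = nrm (P k2)" using w(2) unfolding S_def by blast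
    have "k1 \<noteq> k2" using k1 k2 w(3) by blast
    then show ?thesis using sep1k[OF k1(1) k2(1)] k1(2) k2(2) by simp
  qed
  have sep2: "norm (w1 + w2) \<ge> s" if w: "w1 \<in> S" "w2 \<in> S" for w1 w2
  proof -
    obtain k1 where k1: "k1 \<in> Kset i0 m" "w1 = nrm (P k1)" using w(1) unfolding S_def by blast
    obtain k2 where k2: "k2 \<in> Kset i0 m" "w2 = nrm (P k2)" using w(2) unfolding S_def by blast
    show ?thesis using sep2k[OF k1(1) k2(1)] k1(2) k2(2) by simp
  qed
  define \<gamma> where "\<gamma> = s^2 / 8"
  have g0: "\<gamma> > 0" using s0 by (simp add: \<gamma>_def)
  have s1: "s \<le> 1"
  proof -
    have "1 \<le> dr^2" using dr2 by (simp add: power2_eq_square) (smt (verit) mult_ge1_I)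
    moreover have "1 \<le> real m" using m1 by simp
    ultimately have "1 \<le> 2 * dr^2 * real m" by (smt (verit) mult_ge1_I)
    then show ?thesis unfolding s_def by (metis divide_le_eq_1 less_le_trans zero_less_one)
  qed
  have g1: "\<gamma> < 1" using s0 s1 power_le_one[of s 2] by (simp add: \<gamma>_def)
  have main: "ereal (\<delta> / (1 - \<gamma>)) \<le> OPT_improper TYPE('n) T \<delta>"
  proof (rule lower_generic[OF finS Ssph cardS g0 g1 d0])
    fix u w1 w2 assume a: "norm u = 1" "w1 \<in> S" "w2 \<in> S" "\<bar>w1 \<bullet> u\<bar> > 1 - \<gamma>" "\<bar>w2 \<bullet> u\<bar> > 1 - \<gamma>"
    show "w1 = w2" by (rule uniq_from_sep[OF Ssph s0 sep1 sep2 a(1,2,3)]) (use a(4,5) in \<open>simp_all add: \<gamma>_def\<close>)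
  qed
  have "\<delta> * (1 + (1 / (128 * dr^4)) * real T powr (- 2 / (dr - 1))) \<le> \<delta> * (1 + \<gamma>)"
  proof -
    have Tp: "real T powr (- 2 / (dr - 1)) = 1 / r^2"
      unfolding r_def e_def using T1r
      by (simp add: powr_powr[symmetric] powr_minus divide_inverse powr_realpow[symmetric] power2_eq_square powr_add[symmetric])
    have "(1 / (128 * dr^4)) * (1 / r^2) \<le> \<gamma>"
    proof -
      have "real m ^ 2 \<le> (2 * r)^2" using m_le m1 by (intro power_mono) auto
      have "1 / (32 * dr^4 * (2*r)^2) \<le> 1 / (32 * dr^4 * real m^2)"
      proof (rule divide_left_mono)
        have p1: "0 < 32 * dr^4 * (2*r)^2" using dr2 r1 by simp
        have p2: "0 < 32 * dr^4 * real m^2" using dr2 m1 by simp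
        show "0 < 32 * dr ^ 4 * (2 * r)\<^sup>2 * (32 * dr ^ 4 * (real m)\<^sup>2)" using mult_pos_pos[OF p1 p2] .
        show "32 * dr ^ 4 * (real m)\<^sup>2 \<le> 32 * dr ^ 4 * (2 * r)\<^sup>2"
          using \<open>real m ^ 2 \<le> (2 * r)^2\<close> dr2 by simp
      qed simp
      moreover have "\<gamma> = 1 / (32 * dr^4 * real m^2)"
        by (simp add: \<gamma>_def s_def power_divide power_mult_distrib field_simps)
      moreover have "(1 / (128 * dr^4)) * (1 / r^2) = 1 / (32 * dr^4 * (2*r)^2)"
        by (simp add: power_mult_distrib field_simps)
      ultimately show ?thesis by simp
    qed
    then show ?thesis using d0 Tp by (simp add: mult_left_mono)
  qed
  also have "\<dots> \<le> \<delta> / (1 - \<gamma>)"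
  proof -
    have "(1 + \<gamma>) * (1 - \<gamma>) \<le> 1" by (simp add: algebra_simps)
    then have "1 + \<gamma> \<le> 1 / (1 - \<gamma>)" using g1 by (simp add: divide_simps)
    then show ?thesis using d0 by (simp add: divide_simps mult_left_mono) (smt (verit) g1 mult_left_mono mult.commute)
  qed
  finally have "ereal (\<delta> * (1 + (1 / (128 * dr^4)) * real T powr (- 2 / (dr - 1)))) \<le> ereal (\<delta> / (1 - \<gamma>))"
    by simp
  then have "ereal (\<delta> * (1 + (1 / (128 * dr^4)) * real T powr (- 2 / (dr - 1)))) \<le> OPT_improper TYPE('n) T \<delta>"
    using main by (rule order_trans)
  then show ?thesis unfolding dr_def N_def .
qed



definition Fv :: "'n::finite \<Rightarrow> real \<Rightarrow> nat \<Rightarrow> ('n \<Rightarrow> nat) \<Rightarrow> real^'n" where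
  "Fv i \<sigma> m k = (\<chi> j. if j = i then \<sigma> else -1 + 2 * real (k j) / real m)"

definition nrm :: "real^'n \<Rightarrow> real^'n" where
  "nrm x = (1 / norm x) *\<^sub>R x"

definition Wset :: "nat \<Rightarrow> (real^'n::finite) set" where
  "Wset m = (\<Union>i\<in>UNIV. \<Union>\<sigma>\<in>{1,-1}. (\<lambda>k. nrm (Fv i \<sigma> m k)) ` Kset i m)"

lemma Fv_norm: "\<bar>\<sigma>\<bar> = 1 \<Longrightarrow> norm (Fv i \<sigma> m k) \<ge> 1"
  using component_le_norm_cart[of "Fv i \<sigma> m k" i] by (simp add: Fv_def)

lemma nrm_unit: "norm x \<ge> 1 \<Longrightarrow> norm (nrm x) = 1"
proof -
  assume "norm x \<ge> 1"
  then have "x \<noteq> 0" by (metis norm_zero not_one_le_zero)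
  then show ?thesis by (simp add: nrm_def)
qed

lemma Wset_finite: "finite (Wset m)"
  unfolding Wset_def by (intro finite_UN_I finite_imageI Kset_finite) auto

lemma Wset_sphere: "Wset m \<subseteq> sphere 0 1"
proof
  fix w assume "w \<in> Wset m"
  then obtain i \<sigma> k where "\<sigma> \<in> {1,-1}" "w = nrm (Fv i \<sigma> m k)" unfolding Wset_def by blast
  moreover have "\<bar>\<sigma>\<bar> = 1" using \<open>\<sigma> \<in> {1,-1}\<close> by auto
  ultimately show "w \<in> sphere 0 1" using nrm_unit[OF Fv_norm] by simp
qed

lemma Wset_ne: "Wset m \<noteq> ({} :: (real^'n::finite) set)"
proof -
  have "(\<lambda>_. 0) \<in> Kset (undefined::'n) m" by (simp add: Kset_mem)
  then show ?thesis unfolding Wset_def by blast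
qed

lemma Wset_card: "card (Wset m :: (real^'n::finite) set) \<le> CARD('n) * (2 * (m+1)^(CARD('n) - 1))"
proof -
  let ?B = "\<lambda>(i::'n) \<sigma>. (\<lambda>k. nrm (Fv i \<sigma> m k)) ` Kset i m"
  have cB: "card (?B i \<sigma>) \<le> (m+1)^(CARD('n) - 1)" for i \<sigma>
    using card_image_le[OF Kset_finite, of "\<lambda>k. nrm (Fv i \<sigma> m k)" i m] by (simp add: Kset_card)
  have c2: "card (\<Union>\<sigma>\<in>{1,-1}. ?B i \<sigma>) \<le> 2 * (m+1)^(CARD('n) - 1)" for i
  proof -
    have "card (\<Union>\<sigma>\<in>{1,-1::real}. ?B i \<sigma>) \<le> (\<Sum>\<sigma>\<in>{1,-1::real}. card (?B i \<sigma>))" by (rule card_UN_le) simp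
    also have "\<dots> \<le> (\<Sum>\<sigma>\<in>{1,-1::real}. (m+1)^(CARD('n) - 1))" by (rule sum_mono) (rule cB)
    also have "\<dots> = 2 * (m+1)^(CARD('n) - 1)" by simp
    finally show ?thesis .
  qed
  have "card (Wset m :: (real^'n) set) \<le> (\<Sum>i\<in>UNIV. card (\<Union>\<sigma>\<in>{1,-1}. ?B i \<sigma>))"
    unfolding Wset_def by (rule card_UN_le) simp
  also have "\<dots> \<le> (\<Sum>i\<in>(UNIV::'n set). 2 * (m+1)^(CARD('n) - 1))" by (rule sum_mono) (rule c2)
  also have "\<dots> = CARD('n) * (2 * (m+1)^(CARD('n) - 1))" by simp
  finally show ?thesis .
qed


lemma Wset_net:
  fixes v :: "real^'n::finite"
  assumes m1: "m \<ge> 1" and nv: "norm v = 1"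
  shows "\<exists>w\<in>Wset m. v \<bullet> w \<ge> 1 - 8 * real CARD('n)^2 / real m^2"
proof -
  define N where "N = real CARD('n)"
  let ?f = "\<lambda>j. \<bar>v $ j\<bar>"
  define M where "M = Max (range ?f)"
  have "M \<in> range ?f" unfolding M_def by (rule Max_in) auto
  then obtain i where i: "?f i = M" by auto
  have imax: "\<bar>v $ j\<bar> \<le> \<bar>v $ i\<bar>" for j
  proof -
    have "?f j \<le> M" unfolding M_def by (rule Max_ge) auto
    then show ?thesis using i by simp
  qed
  have "1 \<le> (\<Sum>j\<in>UNIV. \<bar>v $ j\<bar>)" using norm_le_l1_cart[of v] nv by simp
  also have "\<dots> \<le> (\<Sum>j\<in>(UNIV::'n set). \<bar>v $ i\<bar>)" by (rule sum_mono) (rule imax)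
  also have "\<dots> = N * \<bar>v $ i\<bar>" by (simp add: N_def)
  finally have vi1: "1 \<le> N * \<bar>v $ i\<bar>" .
  have vi0: "\<bar>v $ i\<bar> > 0" using vi1 by (metis abs_ge_zero mult_zero_right not_one_le_zero order_le_less)
  define \<sigma> where "\<sigma> = sgn (v $ i)"
  have sig: "\<sigma> \<in> {1, -1}" using vi0 by (auto simp: \<sigma>_def sgn_real_def)
  define p where "p = (1 / \<bar>v $ i\<bar>) *\<^sub>R v"
  have pi: "p $ i = \<sigma>" using vi0 by (auto simp: p_def \<sigma>_def sgn_real_def)
  have pj: "\<bar>p $ j\<bar> \<le> 1" for j using imax[of j] vi0 by (simp add: p_def abs_mult divide_le_eq_1)
  have np: "norm p = 1 / \<bar>v $ i\<bar>" using nv by (simp add: p_def)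
  have np1: "norm p \<ge> 1" using np vi0 by (metis abs_ge_zero component_le_norm_cart le_divide_eq_1_pos nv)
  have nrmp: "nrm p = v" using vi0 nv by (simp add: nrm_def np p_def)
  define k where "k = (\<lambda>j. if j = i then 0 else nat \<lfloor>(p $ j + 1) * real m / 2\<rfloor>)"
  have kK: "k \<in> Kset i m"
  proof -
    have "k j \<le> m" for j
    proof (cases "j = i")
      case False
      have "(p $ j + 1) * real m / 2 \<le> real m"
        using pj[of j] m1 by (simp add: divide_simps)
      then have "\<lfloor>(p $ j + 1) * real m / 2\<rfloor> \<le> int m" by linarith
      then show ?thesis using False by (simp add: k_def)
    qed (simp add: k_def)
    then show ?thesis by (simp add: Kset_mem k_def)
  qed
  define q where "q = Fv i \<sigma> m k"
  have qd: "\<bar>p $ j - q $ j\<bar> \<le> 2 / real m" for j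
  proof (cases "j = i")
    case True then show ?thesis using pi by (simp add: q_def Fv_def)
  next
    case False
    define y where "y = (p $ j + 1) * real m / 2"
    have y0: "y \<ge> 0" using pj[of j] by (simp add: y_def)
    have ky: "real (k j) = of_int \<lfloor>y\<rfloor>" using False y0 by (simp add: k_def y_def)
    have fl: "y - 1 < of_int \<lfloor>y\<rfloor>" "of_int \<lfloor>y\<rfloor> \<le> y" by linarith+
    have qj: "q $ j = -1 + 2 * of_int \<lfloor>y\<rfloor> / real m" using False ky by (simp add: q_def Fv_def)
    have pjy: "p $ j = -1 + 2 * y / real m" using m1 by (simp add: y_def field_simps)
    have "p $ j - q $ j = 2 * (y - of_int \<lfloor>y\<rfloor>) / real m" unfolding pjy qj by (simp add: diff_divide_distrib right_diff_distrib)
    moreover have "0 \<le> y - of_int \<lfloor>y\<rfloor>" "y - of_int \<lfloor>y\<rfloor> \<le> 1" using fl by linarith+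
    ultimately show ?thesis using m1 by (simp add: divide_right_mono)
  qed
  have npq: "norm (p - q) \<le> N * (2 / real m)"
  proof -
    have "norm (p - q) \<le> (\<Sum>j\<in>UNIV. \<bar>(p - q) $ j\<bar>)" by (rule norm_le_l1_cart)
    also have "\<dots> \<le> (\<Sum>j\<in>(UNIV::'n set). 2 / real m)" by (rule sum_mono) (use qd in simp)
    also have "\<dots> = N * (2 / real m)" by (simp add: N_def)
    finally show ?thesis .
  qed
  have q1: "norm q \<ge> 1" unfolding q_def by (rule Fv_norm) (use sig in auto)
  have p0: "p \<noteq> 0" using np1 by (metis norm_zero not_one_le_zero)
  have q0: "q \<noteq> 0" using q1 by (metis norm_zero not_one_le_zero)
  define w where "w = nrm q"
  have wW: "w \<in> Wset m" unfolding w_def q_def Wset_def using kK sig by blast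
  have nw: "norm w = 1" unfolding w_def by (rule nrm_unit[OF q1])
  have "norm (v - w) \<le> 2 * norm (p - q) / norm p"
    using normalize_lip[OF p0 q0] nrmp unfolding w_def nrm_def by simp
  also have "\<dots> \<le> 2 * norm (p - q)" using np1 by (simp add: divide_le_eq mult_le_cancel_left1)
  also have "\<dots> \<le> 4 * N / real m" using npq by simp
  finally have vw: "norm (v - w) \<le> 4 * N / real m" .
  have "v \<bullet> w = ((norm v)\<^sup>2 + (norm w)\<^sup>2 - (norm (v - w))\<^sup>2) / 2" by (rule dot_norm_neg)
  also have "\<dots> = 1 - (norm (v - w))\<^sup>2 / 2" using nv nw by simp
  also have "\<dots> \<ge> 1 - (4 * N / real m)\<^sup>2 / 2"
    using vw power_mono[OF vw, of 2] by simp
  finally have "v \<bullet> w \<ge> 1 - (4 * N / real m)\<^sup>2 / 2" .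
  moreover have "(4 * N / real m)\<^sup>2 / 2 = 8 * N^2 / real m^2" by (simp add: power_divide power_mult_distrib)
  ultimately show ?thesis using wW unfolding N_def by auto
qed



lemma upper_bound_T:
  assumes N2: "CARD('n::finite) \<ge> 2" and d0: "\<delta> > 0"
    and rbig: "real T powr (1 / (real CARD('n) - 1)) \<ge> 16 * real CARD('n)^2"
  shows "OPT_improper TYPE('n) T \<delta>
           \<le> ereal (\<delta> * (1 + 256 * real CARD('n)^4 * real T powr (- 2 / (real CARD('n) - 1))))"
proof -
  define N where "N = CARD('n)"
  define dr where "dr = real N"
  have dr2: "dr \<ge> 2" using N2 by (simp add: dr_def N_def)
  define e where "e = 1 / (dr - 1)"
  define r where "r = real T powr e"
  have rb: "r \<ge> 16 * dr^2" using rbig by (simp add: r_def e_def dr_def N_def)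
  have dr4: "dr^2 \<ge> 4" using dr2 power_mono[OF dr2, of 2] by simp
  have r0: "r > 0" using rb dr4 by linarith
  have T0: "real T > 0" using r0 unfolding r_def by (cases "T = 0") auto
  have rpow: "r ^ (N - 1) = real T"
  proof -
    have "r ^ (N - 1) = r powr real (N - 1)" using r0 by (simp add: powr_realpow)
    also have "\<dots> = real T powr (e * real (N - 1))" unfolding r_def by (simp add: powr_powr)
    also have "e * real (N - 1) = 1" using dr2 N2 by (simp add: e_def dr_def of_nat_diff)
    finally show ?thesis using T0 by simp
  qed
  have r8: "r / (2 * dr) \<ge> 8 * dr"
  proof -
    have "16 * dr^2 = (8 * dr) * (2 * dr)" by (simp add: power2_eq_square)
    then show ?thesis using rb dr2 by (simp add: le_divide_eq)
  qed
  define z where "z = nat \<lfloor>r / (2 * dr)\<rfloor>"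
  have z_le: "real z \<le> r / (2 * dr)" using r8 dr2 unfolding z_def by linarith
  have z_gt: "real z > r / (2 * dr) - 1" using r8 dr2 unfolding z_def by linarith
  have "real z > 15" using z_gt r8 dr2 by linarith
  then have "z > 15" by simp
  then have z16: "real z \<ge> 16" by simp
  define m where "m = z - 1"
  have mz: "real m = real z - 1" using z16 unfolding m_def by (simp add: of_nat_diff)
  have m1z: "m + 1 = z" using z16 unfolding m_def by simp
  have r4: "r / (4 * dr) \<ge> 4 * dr"
  proof -
    have "16 * dr^2 = (4 * dr) * (4 * dr)" by (simp add: power2_eq_square)
    then show ?thesis using rb dr2 by (simp add: le_divide_eq)
  qed
  have half: "r / (2 * dr) = 2 * (r / (4 * dr))" by simp
  have m_ge: "real m \<ge> r / (4 * dr)" using mz z_gt half r4 dr2 by linarith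
  have m_ge4: "real m \<ge> 4 * dr" using m_ge r4 by linarith
  have m1: "m \<ge> 1" using m_ge4 dr2 by simp
  have cardW: "card (Wset m :: (real^'n) set) \<le> T"
  proof -
    have "real (card (Wset m :: (real^'n) set)) \<le> real (N * (2 * (m+1)^(N - 1)))"
      using Wset_card[where m=m, where 'n='n] unfolding N_def of_nat_le_iff .
    also have "\<dots> = (2 * dr) * real z ^ (N - 1)" using mz by (simp add: dr_def)
    also have "\<dots> \<le> (2 * dr) * (r / (2 * dr)) ^ (N - 1)"
      using z_le dr2 by (intro mult_left_mono power_mono) auto
    also have "\<dots> = (2 * dr) * real T / (2 * dr) ^ (N - 1)" using rpow by (simp add: power_divide)
    also have "\<dots> \<le> real T"
    proof -
      have "2 * dr \<le> (2 * dr) ^ (N - 1)" using dr2 N2 by (intro self_le_power) (auto simp: N_def)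
      have pos: "(2*dr)^(N-1) > 0" using dr2 by simp
      have "(2 * dr) * real T \<le> real T * (2*dr)^(N-1)"
        using mult_right_mono[OF \<open>2 * dr \<le> (2 * dr) ^ (N - 1)\<close>, of "real T"] T0 by (simp add: mult.commute)
      then show ?thesis unfolding pos_divide_le_eq[OF pos] .
    qed
    finally show ?thesis by simp
  qed
  define c where "c = 1 - 8 * dr^2 / real m^2"
  have m2: "real m ^ 2 \<ge> 16 * dr^2"
  proof -
    have "(4 * dr)^2 \<le> real m ^ 2" using m_ge4 dr2 by (intro power_mono) auto
    then show ?thesis by (simp add: power_mult_distrib)
  qed
  have frac: "8 * dr^2 / real m^2 \<le> 1/2"
    using m2 m1 by (simp add: divide_simps)
  have c_half: "c \<ge> 1/2" using frac by (simp add: c_def)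
  have c0: "c > 0" using c_half by simp
  have net: "\<exists>w\<in>Wset m. u \<bullet> w \<ge> c" if "norm u = 1" for u :: "real^'n"
    using Wset_net[OF m1 that] by (simp add: c_def dr_def N_def)
  have opt: "OPT_improper TYPE('n) T \<delta> \<le> ereal (\<delta> / c)"
    by (rule upper_generic[OF Wset_finite Wset_sphere Wset_ne cardW c0]) (use d0 net in auto)
  have "\<delta> / c \<le> \<delta> * (1 + 2 * (1 - c))"
  proof -
    have c1: "c \<le> 1" unfolding c_def by simp
    have "c * (1 + 2 * (1 - c)) - 1 = (2 * c - 1) * (1 - c)" by (simp add: algebra_simps)
    moreover have "(2 * c - 1) * (1 - c) \<ge> 0" using c_half c1 by (intro mult_nonneg_nonneg) auto
    ultimately have "1 \<le> c * (1 + 2 * (1 - c))" by linarith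
    then have "1 / c \<le> 1 + 2 * (1 - c)" using c0 by (simp add: divide_le_eq mult.commute)
    then show ?thesis using d0 by (metis mult_left_mono less_imp_le times_divide_eq_right mult_1_right)
  qed
  also have "\<dots> \<le> \<delta> * (1 + 256 * dr^4 * real T powr (- 2 / (dr - 1)))"
  proof -
    have Tp: "real T powr (- 2 / (dr - 1)) = 1 / r^2"
      unfolding r_def e_def using T0
      by (simp add: powr_powr[symmetric] powr_minus divide_inverse powr_realpow[symmetric] power2_eq_square powr_add[symmetric])
    have mr: "real m ^ 2 \<ge> (r / (4 * dr))^2" using m_ge r0 dr2 by (intro power_mono) auto
    have "2 * (1 - c) = 16 * dr^2 / real m^2" by (simp add: c_def)
    also have "\<dots> \<le> 16 * dr^2 / (r / (4 * dr))^2"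
    proof (rule divide_left_mono[OF mr])
      have pa: "0 < (r/(4*dr))^2" using r0 dr2 by simp
      have pb: "0 < real m ^2" using m1 by simp
      show "0 < (real m)\<^sup>2 * (r / (4 * dr))\<^sup>2" using mult_pos_pos[OF pb pa] .
    qed simp
    also have "\<dots> = 256 * dr^4 * (1 / r^2)" using dr2 r0 by (simp add: power_divide power_mult_distrib field_simps)
    finally show ?thesis using d0 Tp by (simp add: mult_left_mono)
  qed
  finally have "ereal (\<delta> / c) \<le> ereal (\<delta> * (1 + 256 * dr^4 * real T powr (- 2 / (dr - 1))))" by simp
  with opt have "OPT_improper TYPE('n) T \<delta> \<le> ereal (\<delta> * (1 + 256 * dr^4 * real T powr (- 2 / (dr - 1))))"
    by (rule order_trans)
  then show ?thesis unfolding dr_def N_def .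
qed


theorem mainTheorem19:
  assumes "CARD('n::finite) \<ge> 2"
  shows "\<exists>a A :: real. \<exists>T' :: nat. a > 0 \<and> A > 0 \<and> T' \<ge> 1 \<and>
    (\<forall>\<delta>::real. \<forall>T::nat. \<delta> > 0 \<longrightarrow> T \<ge> T' \<longrightarrow>
       ereal (\<delta> * (1 + a * real T powr (- 2 / (real CARD('n) - 1))))
         \<le> OPT_improper TYPE('n) T \<delta> \<and>
       OPT_improper TYPE('n) T \<delta>
         \<le> ereal (\<delta> * (1 + A * real T powr (- 2 / (real CARD('n) - 1)))))"
proof -
  define dr where "dr = real CARD('n)"
  have dr2: "dr \<ge> 2" using assms by (simp add: dr_def)
  define B where "B = (16 * dr^2) ^ (CARD('n) - 1)"
  define T' where "T' = max 1 (nat \<lceil>B\<rceil>)"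
  show ?thesis
  proof (rule exI[of _ "1 / (128 * dr^4)"], rule exI[of _ "256 * dr^4"], rule exI[of _ T'], intro conjI allI impI)
    show "0 < 1 / (128 * dr^4)" using dr2 by auto
  next
    show "0 < 256 * dr^4" using dr2 by auto
  next
    show "1 \<le> T'" by (simp add: T'_def)
  next
    fix \<delta> :: real and T :: nat
    assume d0: "\<delta> > 0" and TT: "T' \<le> T"
    have T1: "T \<ge> 1" using TT by (simp add: T'_def)
    show "ereal (\<delta> * (1 + 1 / (128 * dr ^ 4) * real T powr (- 2 / (real CARD('n) - 1)))) \<le> OPT_improper TYPE('n) T \<delta>"
      using lower_bound_T[OF assms T1 d0] unfolding dr_def .
    have TB: "real T \<ge> B"
    proof -
      have "nat \<lceil>B\<rceil> \<le> T" using TT by (simp add: T'_def)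
      then show ?thesis by linarith
    qed
    have B0: "B > 0" using dr2 by (simp add: B_def)
    have "B powr (1 / (dr - 1)) = 16 * dr^2"
    proof -
      have "B = (16 * dr^2) powr real (CARD('n) - 1)" unfolding B_def by (rule powr_realpow[symmetric]) (use dr2 in simp)
      then have "B powr (1 / (dr - 1)) = (16 * dr^2) powr (real (CARD('n) - 1) * (1 / (dr - 1)))"
        by (simp add: powr_powr)
      also have "real (CARD('n) - 1) * (1 / (dr - 1)) = 1" using dr2 assms by (simp add: dr_def of_nat_diff)
      finally show ?thesis using dr2 by simp
    qed
    moreover have "B powr (1 / (dr - 1)) \<le> real T powr (1 / (dr - 1))"
      using TB B0 dr2 by (intro powr_mono2) auto
    ultimately have rbig: "real T powr (1 / (real CARD('n) - 1)) \<ge> 16 * real CARD('n)^2"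
      by (simp add: dr_def)
    show "OPT_improper TYPE('n) T \<delta> \<le> ereal (\<delta> * (1 + 256 * dr ^ 4 * real T powr (- 2 / (real CARD('n) - 1))))"
      using upper_bound_T[OF assms d0 rbig] unfolding dr_def .
  qed
qed


end
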